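(* Let $k\geq 3$ and let $p$ be the POP of length $k$ defined by the single relation $1>k$ (labels $2,\ldots,k-1$ isolated). Then for every $n\geq 0$, the number of $n$-permutations avoiding $p$ equals the number of $n$-permutations $\sigma$ such that, for every cycle $c$ of $\sigma$ (in its disjoint cycle decomposition), $\max(c)-\min(c)\leq k-2$, i.e. the smallest integer interval containing all elements of $c$ has at most $k-1$ elements.
   Context: An $n$-permutation is a word $\pi=\pi_1\cdots\pi_n$ containing each of $1,\ldots,n$ exactly once (equivalently a bijection of $\{1,\ldots,n\}$, which has a decomposition into disjoint cycles). A partially ordered pattern (POP) $p$ of length $k$ is a partial order on the label set $\{1,\ldots,k\}$; it is described by a set of generating relations, where a relation $x>y$ means that in an occurrence the entry in the $x$-th chosen position must be larger than the entry in the $y$-th chosen position, and labels not involved in any relation are unconstrained. An $n$-permutation $\pi$ contains $p$ if there are indices $1\leq i_1<\cdots<i_k\leq n$ such that $\pi_{i_x}>\pi_{i_y}$ whenever $x>y$ in the partial order; otherwise $\pi$ avoids $p$. *)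

theory Defs
  imports Main "HOL-Combinatorics.Permutations" "HOL-Combinatorics.Orbits"
begin

text \<open>An n-permutation pi = pi_1 ... pi_n is represented by a function
  f with f permutes {1..n}, pi_i = f i.
  A POP of length k is given by a set P of generating relations (x,y),
  meaning label x > label y, with labels in {1..k}.\<close>

definition pop_contains :: "nat \<Rightarrow> (nat \<Rightarrow> nat) \<Rightarrow> nat \<Rightarrow> (nat \<times> nat) set \<Rightarrow> bool" where
  "pop_contains n f k P \<longleftrightarrow>
     (\<exists>idx :: nat \<Rightarrow> nat. strict_mono_on {1..k} idx \<and> idx ` {1..k} \<subseteq> {1..n} \<and>
        (\<forall>(x, y) \<in> P. f (idx x) > f (idx y)))"

definition pop_avoids :: "nat \<Rightarrow> (nat \<Rightarrow> nat) \<Rightarrow> nat \<Rightarrow> (nat \<times> nat) set \<Rightarrow> bool" where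
  "pop_avoids n f k P \<longleftrightarrow> \<not> pop_contains n f k P"

definition cycles_span_le :: "nat \<Rightarrow> (nat \<Rightarrow> nat) \<Rightarrow> nat \<Rightarrow> bool" where
  "cycles_span_le n \<sigma> d \<longleftrightarrow>
     (\<forall>x \<in> {1..n}. Max (orbit \<sigma> x) - Min (orbit \<sigma> x) \<le> d)"

end

theory Submission
  imports Defs
begin


definition rl :: "(nat \<Rightarrow> nat) \<Rightarrow> nat \<Rightarrow> nat \<Rightarrow> bool" where
  "rl u n j \<longleftrightarrow> (\<forall>k. j < k \<and> k \<le> n \<longrightarrow> u j < u k)"

definition pv :: "(nat \<Rightarrow> nat) \<Rightarrow> nat \<Rightarrow> nat \<Rightarrow> nat" where
  "pv u n j = Max (insert 0 {r. 1 \<le> r \<and> r < j \<and> rl u n r})"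

definition tau :: "(nat \<Rightarrow> nat) \<Rightarrow> nat \<Rightarrow> nat \<Rightarrow> nat" where
  "tau u n j = (if rl u n j then pv u n j + 1 else j + 1)"

lemma rl_n: "rl u n n" by (auto simp: rl_def)

lemma pv_fin: "finite (insert 0 {r. 1 \<le> r \<and> r < j \<and> rl u n r})"
  by (rule finite_insert[THEN iffD2], rule finite_subset[of _ "{..<j}"]) auto

lemma pv_lt: "1 \<le> j \<Longrightarrow> pv u n j < j"
  unfolding pv_def using pv_fin[of j u n] by (subst Max_less_iff) auto

lemma pv_ge: "1 \<le> r \<Longrightarrow> r < j \<Longrightarrow> rl u n r \<Longrightarrow> r \<le> pv u n j"
  unfolding pv_def using pv_fin[of j u n] by (intro Max_ge) auto

lemma pv_cases: "pv u n j = 0 \<or> (1 \<le> pv u n j \<and> pv u n j < j \<and> rl u n (pv u n j))"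
proof -
  have "pv u n j \<in> insert 0 {r. 1 \<le> r \<and> r < j \<and> rl u n r}"
    unfolding pv_def using pv_fin[of j u n] by (intro Max_in) auto
  then show ?thesis by auto
qed

lemma pv_gap: "pv u n j < r \<Longrightarrow> r < j \<Longrightarrow> \<not> rl u n r"
  using pv_ge[of r j u n] by (cases "r = 0") auto

lemma tau_in: "j \<in> {1..n} \<Longrightarrow> tau u n j \<in> {1..n}"
proof -
  assume j: "j \<in> {1..n}"
  show ?thesis
  proof (cases "rl u n j")
    case True then show ?thesis using pv_lt[of j u n] j by (auto simp: tau_def)
  next
    case False
    then have "j \<noteq> n" using rl_n by metis
    then show ?thesis using False j by (auto simp: tau_def)
  qed
qed

lemma tau_inj: "inj_on (tau u n) {1..n}"
proof (rule inj_onI)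
  fix x y assume x: "x \<in> {1..n}" and y: "y \<in> {1..n}" and e: "tau u n x = tau u n y"
  have A: "\<And>a b. a \<in> {1..n} \<Longrightarrow> b \<in> {1..n} \<Longrightarrow> rl u n a \<Longrightarrow> \<not> rl u n b \<Longrightarrow> tau u n a \<noteq> tau u n b"
  proof
    fix a b assume a: "a \<in> {1..n}" and b: "b \<in> {1..n}" and ra: "rl u n a" and rb: "\<not> rl u n b"
       and eq: "tau u n a = tau u n b"
    then have "pv u n a = b" by (simp add: tau_def)
    then show False using pv_cases[of u n a] b rb by auto
  qed
  have B: "\<And>a b. a \<in> {1..n} \<Longrightarrow> b \<in> {1..n} \<Longrightarrow> rl u n a \<Longrightarrow> rl u n b \<Longrightarrow> a < b \<Longrightarrow> pv u n a < pv u n b"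
    using pv_ge pv_lt by (meson le_trans linorder_not_le atLeastAtMost_iff)
  show "x = y"
  proof (cases "rl u n x"; cases "rl u n y")
    assume "rl u n x" "rl u n y"
    then show ?thesis using B[OF x y] B[OF y x] e by (simp add: tau_def) (metis less_irrefl linorder_neqE_nat)
  next
    assume "rl u n x" "\<not> rl u n y" then show ?thesis using A x y e by blast
  next
    assume "\<not> rl u n x" "rl u n y" then show ?thesis using A x y e by metis
  next
    assume "\<not> rl u n x" "\<not> rl u n y" then show ?thesis using e by (simp add: tau_def)
  qed
qed

lemma tau_bij: "bij_betw (tau u n) {1..n} {1..n}"
  unfolding bij_betw_def using tau_inj tau_in endo_inj_surj[of "{1..n}" "tau u n"] by blast

definition F :: "(nat \<Rightarrow> nat) \<Rightarrow> nat \<Rightarrow> nat \<Rightarrow> nat" where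
  "F u n x = (if x \<in> {1..n} then u (tau u n (inv u x)) else x)"

definition blk :: "(nat \<Rightarrow> nat) \<Rightarrow> nat \<Rightarrow> nat \<Rightarrow> nat set" where
  "blk u n e = {q. 1 \<le> q \<and> q \<le> e \<and> (\<forall>r. q \<le> r \<and> r < e \<longrightarrow> \<not> rl u n r)}"

lemma F_perm:
  assumes u: "u permutes {1..n}"
  shows "F u n permutes {1..n}"
proof (rule bij_imp_permutes)
  have "bij_betw (u \<circ> (tau u n \<circ> inv u)) {1..n} {1..n}"
    by (intro bij_betw_trans[OF _ permutes_imp_bij[OF u]] bij_betw_trans[OF permutes_imp_bij[OF permutes_inv[OF u]]] tau_bij)
  then show "bij_betw (F u n) {1..n} {1..n}"
    by (rule bij_betw_cong[THEN iffD1, rotated]) (auto simp: F_def)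
qed (auto simp: F_def)

lemma F_at:
  assumes u: "u permutes {1..n}" and p: "p \<in> {1..n}"
  shows "F u n (u p) = u (tau u n p)"
  using permutes_in_image[OF u, of p] p permutes_inverses(2)[OF u] by (simp add: F_def)

lemma blk_min:
  assumes u: "u permutes {1..n}" and e: "e \<le> n" "rl u n e" and q: "q \<in> blk u n e"
  shows "u e \<le> u q"
proof -
  have q1: "1 \<le> q" "q \<le> e" and gap: "\<And>r. q \<le> r \<Longrightarrow> r < e \<Longrightarrow> \<not> rl u n r" using q by (auto simp: blk_def)
  define M where "M = u ` {q..n}"
  have fM: "finite M" "M \<noteq> {}" using q1 e by (auto simp: M_def)
  obtain m where m: "m \<in> {q..n}" "u m = Min M" using Min_in[OF fM] by (auto simp: M_def)
  have minle: "\<And>k. k \<in> {q..n} \<Longrightarrow> u m \<le> u k"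
  proof -
    fix k assume "k \<in> {q..n}"
    then have "u k \<in> M" by (simp add: M_def)
    then show "u m \<le> u k" using Min_le[OF fM(1)] m(2) by simp
  qed
  have inj: "inj_on u {1..n}" using permutes_inj_on[OF u] .
  have "rl u n m"
    unfolding rl_def
  proof (intro allI impI)
    fix k assume k: "m < k \<and> k \<le> n"
    then have "u m \<le> u k" using minle m by auto
    moreover have "u m \<noteq> u k"
    proof
      assume "u m = u k"
      moreover have "m \<in> {1..n}" "k \<in> {1..n}" using m k q1 by auto
      ultimately have "m = k" using inj_onD[OF inj] by blast
      then show False using k by simp
    qed
    ultimately show "u m < u k" by simp
  qed
  then have "\<not> m < e" using gap m by auto
  moreover have "\<not> e < m"
  proof
    assume em: "e < m"
    then have "u e < u m" using e(2) m unfolding rl_def by auto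
    moreover have "u m \<le> u e" using minle[of e] q1 e by simp
    ultimately show False by simp
  qed
  ultimately have "m = e" by simp
  moreover have "q \<in> {q..n}" using q1 e by simp
  ultimately show ?thesis using minle[of q] by simp
qed

lemma tau_blk:
  assumes e: "e \<le> n" "rl u n e" and q: "q \<in> blk u n e"
  shows "tau u n q \<in> blk u n e"
proof (cases "rl u n q")
  case True
  have "\<not> q < e" using q True unfolding blk_def by auto
  then have "q = e" using q unfolding blk_def by auto
  then show ?thesis using True pv_lt[of e u n] pv_gap[of u n e] q unfolding blk_def tau_def by auto
next
  case False
  then have "q \<noteq> e" using e by auto
  then show ?thesis using False q unfolding blk_def tau_def by auto
qed

lemma ex_end:
  assumes "j \<le> n"
  shows "\<exists>e. j \<le> e \<and> e \<le> n \<and> rl u n e \<and> (\<forall>r. j \<le> r \<and> r < e \<longrightarrow> \<not> rl u n r)"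
proof -
  define P where "P = (\<lambda>r. j \<le> r \<and> r \<le> n \<and> rl u n r)"
  have "P n" using assms rl_n unfolding P_def by auto
  then have e1: "P (Least P)" by (rule LeastI)
  have e2: "\<And>r. r < Least P \<Longrightarrow> \<not> P r" by (rule not_less_Least)
  have "\<forall>r. j \<le> r \<and> r < Least P \<longrightarrow> \<not> rl u n r"
  proof (intro allI impI)
    fix r assume r: "j \<le> r \<and> r < Least P"
    then have "r \<le> n" using e1 unfolding P_def by auto
    then show "\<not> rl u n r" using e2[of r] r unfolding P_def by auto
  qed
  then show ?thesis using e1 unfolding P_def by blast
qed

lemma orbit_sub:
  assumes u: "u permutes {1..n}" and x: "x \<in> {1..n}"
    and e: "inv u x \<le> e" "e \<le> n" "rl u n e" "\<forall>r. inv u x \<le> r \<and> r < e \<longrightarrow> \<not> rl u n r"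
  shows "orbit (F u n) x \<subseteq> u ` blk u n e"
proof
  have jx: "inv u x \<in> {1..n}" "u (inv u x) = x"
    using x permutes_in_image[OF permutes_inv[OF u]] permutes_inverses(1)[OF u] by auto
  have jb: "inv u x \<in> blk u n e" using jx e unfolding blk_def by auto
  have sub: "blk u n e \<subseteq> {1..n}" using e unfolding blk_def by auto
  fix y assume "y \<in> orbit (F u n) x"
  then show "y \<in> u ` blk u n e"
  proof induction
    case base
    have "F u n x = u (tau u n (inv u x))" using F_at[OF u jx(1)] jx by simp
    then show ?case using tau_blk[OF e(2,3) jb] by auto
  next
    case (step y)
    then obtain q where q: "q \<in> blk u n e" "y = u q" by auto
    then show ?case using F_at[OF u, of q] sub tau_blk[OF e(2,3) q(1)] by auto
  qed
qed

definition good :: "(nat \<Rightarrow> nat) \<Rightarrow> nat \<Rightarrow> nat \<Rightarrow> bool" where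
  "good u d n \<longleftrightarrow> (\<forall>a b. 1 \<le> a \<longrightarrow> a < b \<longrightarrow> b \<le> n \<longrightarrow> u a \<le> u b + d)"

lemma good_span:
  assumes u: "u permutes {1..n}" and g: "good u d n"
  shows "cycles_span_le n (F u n) d"
  unfolding cycles_span_le_def
proof
  fix x assume x: "x \<in> {1..n}"
  have jx: "inv u x \<in> {1..n}"
    using x permutes_in_image[OF permutes_inv[OF u]] by auto
  obtain e where e: "inv u x \<le> e" "e \<le> n" "rl u n e" "\<forall>r. inv u x \<le> r \<and> r < e \<longrightarrow> \<not> rl u n r"
    using ex_end[of "inv u x" n u] jx by auto
  define Ob where "Ob = orbit (F u n) x"
  have Osub: "Ob \<subseteq> u ` blk u n e" using orbit_sub[OF u x e] by (simp add: Ob_def)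
  have bnd: "\<And>y. y \<in> Ob \<Longrightarrow> u e \<le> y \<and> y \<le> u e + d"
  proof -
    fix y assume "y \<in> Ob"
    then obtain q where q: "q \<in> blk u n e" "y = u q" using Osub by auto
    have "u e \<le> u q" using blk_min[OF u e(2,3) q(1)] .
    moreover have "u q \<le> u e + d"
    proof (cases "q = e")
      case False
      then have "q < e" "1 \<le> q" using q unfolding blk_def by auto
      then show ?thesis using g e unfolding good_def by auto
    qed simp
    ultimately show "u e \<le> y \<and> y \<le> u e + d" using q by simp
  qed
  have fin: "finite Ob"
    using Osub by (rule finite_subset) (auto simp: blk_def)
  have ne: "Ob \<noteq> {}" using orbit_nonempty by (simp add: Ob_def)
  have "Max Ob \<le> u e + d" using bnd Max_in[OF fin ne] by blast
  moreover have "u e \<le> Min Ob" using bnd Min_in[OF fin ne] by blast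
  ultimately show "Max (orbit (F u n) x) - Min (orbit (F u n) x) \<le> d"
    unfolding Ob_def[symmetric] by simp
qed



lemma span_good:
  assumes u: "u permutes {1..n}" and sp: "cycles_span_le n (F u n) d"
  shows "good u d n"
  unfolding good_def
proof (intro allI impI, rule ccontr)
  fix a b assume a: "1 \<le> a" and ab: "a < b" and b: "b \<le> n" and nb: "\<not> u a \<le> u b + d"
  obtain e where e: "a \<le> e" "e \<le> n" "rl u n e" "\<forall>r. a \<le> r \<and> r < e \<longrightarrow> \<not> rl u n r"
    using ex_end[of a n u] ab b by auto
  have iter: "a + i \<le> e \<Longrightarrow> (F u n ^^ i) (u a) = u (a + i)" for i
  proof (induction i)
    case (Suc i)
    then have IH: "(F u n ^^ i) (u a) = u (a + i)" by simp
    have ai: "a + i \<in> {1..n}" using Suc.prems a e by auto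
    have nrl: "\<not> rl u n (a + i)" using e(4) Suc.prems by auto
    have "(F u n ^^ Suc i) (u a) = F u n (u (a + i))" using IH by simp
    also have "\<dots> = u (tau u n (a + i))" using F_at[OF u ai] .
    also have "\<dots> = u (a + Suc i)" using nrl by (simp add: tau_def)
    finally show ?case .
  qed simp
  have perm: "permutation (F u n)" using permutes_imp_permutation[OF _ F_perm[OF u]] by simp
  define c where "c = (if b \<le> e then b else e)"
  have ac: "a \<le> c" "c \<le> e" using ab e unfolding c_def by auto
  have uc: "u c + d < u a"
  proof (cases "b \<le> e")
    case True then show ?thesis using nb unfolding c_def by simp
  next
    case False
    then have "u e < u b" using e(3) b unfolding rl_def by auto
    then show ?thesis using nb False unfolding c_def by simp
  qed
  define Ob where "Ob = orbit (F u n) (u a)"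
  have self: "u a \<in> Ob" unfolding Ob_def by (rule permutation_self_in_orbit[OF perm])
  have cin: "u c \<in> Ob"
  proof -
    have "u c = (F u n ^^ (c - a)) (u a)" using iter[of "c - a"] ac by simp
    then show ?thesis unfolding Ob_def orbit_altdef_permutation[OF perm] by blast
  qed
  have fin: "finite Ob" unfolding Ob_def by (rule finite_orbit) (use self Ob_def in simp)
  have xa: "u a \<in> {1..n}" using permutes_in_image[OF u] a ab b by auto
  have "Max Ob - Min Ob \<le> d" using sp xa unfolding cycles_span_le_def Ob_def by blast
  moreover have "u a \<le> Max Ob" using Max_ge[OF fin self] .
  moreover have "Min Ob \<le> u c" using Min_le[OF fin cin] .
  ultimately show False using uc by linarith
qed

lemma img_split:
  assumes u: "u permutes {1..n}" and j: "j \<le> n"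
  shows "u ` {Suc j..n} = {1..n} - u ` {1..j}"
proof -
  have "{Suc j..n} = {1..n} - {1..j}" using j by auto
  then have "u ` {Suc j..n} = u ` {1..n} - u ` {1..j}"
    using inj_on_image_set_diff[OF permutes_inj_on[OF u], of "{1..n}" "{1..j}"] j by auto
  then show ?thesis using permutes_image[OF u] by simp
qed

lemma F_step:
  assumes u: "u permutes {1..n}" and j: "j < n"
  shows "u (Suc j) = F u n (if 1 \<le> j \<and> \<not> rl u n j then u j else Min (u ` {Suc j..n}))"
proof (cases "1 \<le> j \<and> \<not> rl u n j")
  case True
  then have "F u n (u j) = u (tau u n j)" using F_at[OF u] j by auto
  then show ?thesis using True by (simp add: tau_def)
next
  case False
  define M where "M = u ` {Suc j..n}"
  have fM: "finite M" "M \<noteq> {}" using j by (auto simp: M_def)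
  obtain m where m: "m \<in> {Suc j..n}" "u m = Min M" using Min_in[OF fM] by (auto simp: M_def)
  have minle: "\<And>k. k \<in> {Suc j..n} \<Longrightarrow> u m \<le> u k"
  proof -
    fix k assume "k \<in> {Suc j..n}"
    then have "u k \<in> M" by (simp add: M_def)
    then show "u m \<le> u k" using Min_le[OF fM(1)] m(2) by simp
  qed
  have inj: "inj_on u {1..n}" using permutes_inj_on[OF u] .
  have rlm: "rl u n m"
    unfolding rl_def
  proof (intro allI impI)
    fix k assume k: "m < k \<and> k \<le> n"
    then have "u m \<le> u k" using minle m by auto
    moreover have "u m \<noteq> u k"
    proof
      assume "u m = u k"
      moreover have "m \<in> {1..n}" "k \<in> {1..n}" using m k by auto
      ultimately have "m = k" using inj_onD[OF inj] by blast
      then show False using k by simp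
    qed
    ultimately show "u m < u k" by simp
  qed
  have m1: "1 \<le> m" using m by simp
  have pv1: "j \<le> pv u n m"
  proof (cases "j = 0")
    case False
    then have "rl u n j" using False \<open>\<not> (1 \<le> j \<and> \<not> rl u n j)\<close> by simp
    then show ?thesis using pv_ge[of j m u n] False m by simp
  qed simp
  have pv2: "\<not> j < pv u n m"
  proof
    assume jp: "j < pv u n m"
    then have c: "1 \<le> pv u n m \<and> pv u n m < m \<and> rl u n (pv u n m)" using pv_cases[of u n m] by auto
    then have "u (pv u n m) < u m" using m unfolding rl_def by auto
    moreover have "u m \<le> u (pv u n m)" using minle[of "pv u n m"] jp c m by auto
    ultimately show False by simp
  qed
  have "pv u n m = j" using pv1 pv2 by simp
  then have "tau u n m = Suc j" using rlm by (simp add: tau_def)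
  then have "F u n (u m) = u (Suc j)" using F_at[OF u, of m] m by simp
  moreover have "(if 1 \<le> j \<and> \<not> rl u n j then u j else Min (u ` {Suc j..n})) = u m"
    using m(2) by (subst if_not_P[OF False]) (simp add: M_def)
  ultimately show ?thesis by simp
qed

lemma F_inj:
  assumes u1: "u1 permutes {1..n}" and u2: "u2 permutes {1..n}" and eq: "F u1 n = F u2 n"
  shows "u1 = u2"
proof -
  have main: "j \<le> n \<Longrightarrow> \<forall>i. 1 \<le> i \<and> i \<le> j \<longrightarrow> u1 i = u2 i" for j
  proof (induction j)
    case (Suc j)
    then have IH: "\<forall>i. 1 \<le> i \<and> i \<le> j \<longrightarrow> u1 i = u2 i" by simp
    have jn: "j < n" using Suc.prems by simp
    have im: "u1 ` {1..j} = u2 ` {1..j}" using IH by (intro image_cong) auto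
    have im2: "u1 ` {Suc j..n} = u2 ` {Suc j..n}"
      using img_split[OF u1, of j] img_split[OF u2, of j] jn im by simp
    have rleq: "1 \<le> j \<Longrightarrow> rl u1 n j = rl u2 n j"
    proof -
      assume j1: "1 \<le> j"
      have r: "\<And>u. rl u n j = (\<forall>y \<in> u ` {Suc j..n}. u j < y)" unfolding rl_def by auto
      have "u1 j = u2 j" using IH j1 by simp
      then show ?thesis by (simp only: r im2)
    qed
    have "u1 (Suc j) = u2 (Suc j)"
      using F_step[OF u1 jn] F_step[OF u2 jn] eq rleq IH im2 by (cases "1 \<le> j") auto
    then show ?case using IH by (metis le_Suc_eq)
  qed simp
  show ?thesis
  proof
    fix x show "u1 x = u2 x"
    proof (cases "x \<in> {1..n}")
      case True then show ?thesis using main[of n] by auto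
    next
      case False then show ?thesis using permutes_not_in[OF u1 False] permutes_not_in[OF u2 False] by simp
    qed
  qed
qed



lemma pop_iff:
  assumes k: "k \<ge> 3"
  shows "pop_contains n f k {(1, k)} \<longleftrightarrow>
    (\<exists>i j. 1 \<le> i \<and> i < j \<and> j \<le> n \<and> k - 1 \<le> j - i \<and> f j < f i)"
proof
  assume "pop_contains n f k {(1, k)}"
  then obtain idx where sm: "strict_mono_on {1..k} idx" and im: "idx ` {1..k} \<subseteq> {1..n}"
    and rel: "f (idx k) < f (idx 1)" unfolding pop_contains_def by auto
  have grow: "x \<le> k \<Longrightarrow> 1 \<le> x \<Longrightarrow> idx 1 + (x - 1) \<le> idx x" for x
  proof (induction x)
    case (Suc x)
    show ?case
    proof (cases "x = 0")
      case False
      then have "idx x < idx (Suc x)" using strict_mono_onD[OF sm, of x "Suc x"] Suc.prems by auto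
      then show ?thesis using Suc False by auto
    qed simp
  qed simp
  have "idx 1 + (k - 1) \<le> idx k" using grow[of k] k by simp
  moreover have "1 \<in> {1..k}" "k \<in> {1..k}" using k by auto
  then have "idx 1 \<in> {1..n}" "idx k \<in> {1..n}" using im by (blast, blast)
  ultimately show "\<exists>i j. 1 \<le> i \<and> i < j \<and> j \<le> n \<and> k - 1 \<le> j - i \<and> f j < f i"
    using rel k by (intro exI[of _ "idx 1"] exI[of _ "idx k"]) auto
next
  assume "\<exists>i j. 1 \<le> i \<and> i < j \<and> j \<le> n \<and> k - 1 \<le> j - i \<and> f j < f i"
  then obtain i j where ij: "1 \<le> i" "i < j" "j \<le> n" "k - 1 \<le> j - i" "f j < f i" by blast
  define idx where "idx = (\<lambda>x. if x = k then j else i + x - 1)"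
  have "strict_mono_on {1..k} idx"
  proof (rule strict_mono_onI)
    fix r s assume r: "r \<in> {1..k}" and s: "s \<in> {1..k}" and rs: "r < s"
    then show "idx r < idx s" using ij unfolding idx_def by auto
  qed
  moreover have "idx ` {1..k} \<subseteq> {1..n}" using ij unfolding idx_def by auto
  moreover have "f (idx k) < f (idx 1)" using ij k unfolding idx_def by auto
  ultimately show "pop_contains n f k {(1, k)}" unfolding pop_contains_def by blast
qed

lemma goodD: "good u d n \<Longrightarrow> 1 \<le> a \<Longrightarrow> a < b \<Longrightarrow> b \<le> n \<Longrightarrow> u a \<le> u b + d"
  by (simp add: good_def)

lemma not_good: "\<not> good u d n \<Longrightarrow> \<exists>a b. 1 \<le> a \<and> a < b \<and> b \<le> n \<and> \<not> u a \<le> u b + d"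
  unfolding good_def by blast

lemma avoid_good:
  assumes k: "k \<ge> 3" and f: "f permutes {1..n}"
  shows "pop_avoids n f k {(1, k)} \<longleftrightarrow> good (inv f) (k - 2) n"
proof -
  have fi: "\<And>x. f (inv f x) = x" "\<And>x. inv f (f x) = x" using permutes_inverses[OF f] by auto
  have "(\<exists>i j. 1 \<le> i \<and> i < j \<and> j \<le> n \<and> k - 1 \<le> j - i \<and> f j < f i) \<longleftrightarrow> \<not> good (inv f) (k - 2) n"
  proof
    assume "\<exists>i j. 1 \<le> i \<and> i < j \<and> j \<le> n \<and> k - 1 \<le> j - i \<and> f j < f i"
    then obtain i j where ij: "1 \<le> i" "i < j" "j \<le> n" "k - 1 \<le> j - i" "f j < f i" by blast
    have "j \<in> {1..n}" "i \<in> {1..n}" using ij by auto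
    then have "f j \<in> {1..n}" "f i \<in> {1..n}" by (simp_all only: permutes_in_image[OF f])
    moreover have "\<not> inv f (f j) \<le> inv f (f i) + (k - 2)"
      unfolding fi using ij(2,4) k by linarith
    ultimately have h: "1 \<le> f j" "f j < f i" "f i \<le> n" "\<not> inv f (f j) \<le> inv f (f i) + (k - 2)"
      using ij(5) by auto
    show "\<not> good (inv f) (k - 2) n"
    proof
      assume "good (inv f) (k - 2) n"
      from goodD[OF this h(1,2,3)] h(4) show False by simp
    qed
  next
    assume "\<not> good (inv f) (k - 2) n"
    then obtain a b where ab: "1 \<le> a" "a < b" "b \<le> n" "\<not> inv f a \<le> inv f b + (k - 2)"
      using not_good[of "inv f" "k - 2" n] by auto
    have "a \<in> {1..n}" "b \<in> {1..n}" using ab by auto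
    then have "inv f a \<in> {1..n}" "inv f b \<in> {1..n}" by (simp_all only: permutes_in_image[OF permutes_inv[OF f]])
    moreover have "inv f b < inv f a" "k - 1 \<le> inv f a - inv f b" using ab(4) k by linarith+
    moreover have "f (inv f a) < f (inv f b)" unfolding fi using ab(2) .
    ultimately have "1 \<le> inv f b \<and> inv f b < inv f a \<and> inv f a \<le> n \<and> k - 1 \<le> inv f a - inv f b \<and> f (inv f a) < f (inv f b)"
      by simp
    then show "\<exists>i j. 1 \<le> i \<and> i < j \<and> j \<le> n \<and> k - 1 \<le> j - i \<and> f j < f i"
      by (intro exI)
  qed
  then show ?thesis unfolding pop_avoids_def using pop_iff[OF k] by simp
qed

theorem theorem2p7:
  fixes k n :: nat
  assumes "k \<ge> 3"
  shows "card {f. f permutes {1..n} \<and> pop_avoids n f k {(1, k)}}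
       = card {\<sigma>. \<sigma> permutes {1..n} \<and> cycles_span_le n \<sigma> (k - 2)}"
proof -
  define d where "d = k - 2"
  define A where "A = {f. f permutes {1..n} \<and> pop_avoids n f k {(1, k)}}"
  define W where "W = {u. u permutes {1..n} \<and> good u d n}"
  define S where "S = {\<sigma>. \<sigma> permutes {1..n} \<and> cycles_span_le n \<sigma> d}"
  define P where "P = {p. p permutes {1..(n::nat)}}"
  have AW: "inv ` A = W"
  proof
    show "inv ` A \<subseteq> W" using avoid_good[OF assms] permutes_inv unfolding A_def W_def d_def by auto
  next
    show "W \<subseteq> inv ` A"
    proof
      fix u assume "u \<in> W"
      then have u: "u permutes {1..n}" "good u d n" unfolding W_def by auto
      have "inv u \<in> A" using avoid_good[OF assms permutes_inv[OF u(1)]] u permutes_inv[OF u(1)]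
          permutes_inv_inv[OF u(1)] unfolding A_def d_def by simp
      moreover have "u = inv (inv u)" using permutes_inv_inv[OF u(1)] by simp
      ultimately show "u \<in> inv ` A" by blast
    qed
  qed
  have injA: "inj_on inv A"
    by (rule inj_onI) (metis (no_types, lifting) A_def mem_Collect_eq permutes_inv_inv)
  have c1: "card A = card W" using card_image[OF injA] AW by simp
  have injP: "inj_on (\<lambda>u. F u n) P" by (rule inj_onI) (use F_inj in \<open>auto simp: P_def\<close>)
  have finP: "finite P" unfolding P_def by (rule finite_permutations) simp
  have FP: "(\<lambda>u. F u n) ` P = P"
  proof (rule endo_inj_surj[OF finP _ injP])
    show "(\<lambda>u. F u n) ` P \<subseteq> P" unfolding P_def using F_perm by blast
  qed
  have WS: "(\<lambda>u. F u n) ` W = S"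
  proof
    show "(\<lambda>u. F u n) ` W \<subseteq> S" using good_span F_perm unfolding W_def S_def by auto
  next
    show "S \<subseteq> (\<lambda>u. F u n) ` W"
    proof
      fix s assume s: "s \<in> S"
      then have "s \<in> P" unfolding S_def P_def by auto
      then obtain u where u: "u \<in> P" "s = F u n" using FP by (metis imageE)
      have "good u d n" using span_good[of u n d] u s unfolding P_def S_def by auto
      then show "s \<in> (\<lambda>u. F u n) ` W" using u unfolding W_def P_def by auto
    qed
  qed
  have "W \<subseteq> P" unfolding W_def P_def by blast
  then have injW: "inj_on (\<lambda>u. F u n) W" using inj_on_subset[OF injP] by blast
  have c2: "card W = card S" using card_image[OF injW] WS by simp
  show ?thesis using c1 c2 unfolding A_def S_def d_def by simp
qed

end
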